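(* Let $(\Lambda,d)$ be a finitely aligned $k$-graph and give $X_\Lambda$ the topology generated by the subbasis $\{D_G,X_\Lambda\setminus D_G:G\in S_\Lambda\}$. Then $D_F$ is compact for each $F\in S_\Lambda$.
   Context: A $k$-graph $(\Lambda,d)$ is a countable small category $\Lambda$ (objects identified with identity morphisms) with a functor $d:\Lambda\to\mathbb N^k$ satisfying unique factorization: whenever $d(\lambda)=m+n$ there are unique $\mu,\nu$ with $d(\mu)=m$, $d(\nu)=n$, $\lambda=\mu\nu$. $r,s$ range/source. $\Lambda^{\min}(\lambda,\mu)=\{(\alpha,\beta):\lambda\alpha=\mu\beta,\ d(\lambda\alpha)=d(\lambda)\vee d(\mu)\}$; finitely aligned means all are finite. $S_\Lambda$ is the set of finite $F\subseteq\{(\lambda,\mu):s(\lambda)=s(\mu)\}$ such that distinct $(\lambda,\mu),(\nu,\omega)\in F$ satisfy $\Lambda^{\min}(\lambda,\nu)=\Lambda^{\min}(\mu,\omega)=\emptyset$. $\Omega_{k,m}$ ($m\in(\mathbb N\cup\{\infty\})^k$): objects $\{p\in\mathbb N^k:p\le m\}$, morphisms $(p,q)$ with $p\le q\le m$, $r(p,q)=p$, $s(p,q)=q$, $d(p,q)=q-p$. $X_\Lambda$ = all degree-preserving functors $x:\Omega_{k,m}\to\Lambda$; $d(x)=m$. $D_F=\{x\in X_\Lambda:\exists(\lambda,\mu)\in F,\ d(\mu)\le d(x),\ x(0,d(\mu))=\mu\}$. *)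

theory Defs
  imports "HOL-Analysis.Analysis" "HOL-Library.Extended_Nat"
begin

text \<open>Elements of N^k are represented as functions nat => nat vanishing
  at all indices i >= k; the order is the pointwise order, join is pointwise max (sup),
  addition/subtraction are pointwise. A k-graph is given by a set Mor of morphisms,
  a set Obj of objects (identified with identity morphisms, Obj a subset of Mor),
  range r, source s, a composition cmp (cmp lam mu is "lam mu", defined when
  s lam = r mu) and a degree functor d.\<close>

definition in_Nk :: "nat \<Rightarrow> (nat \<Rightarrow> nat) \<Rightarrow> bool" where
  "in_Nk k n \<longleftrightarrow> (\<forall>i\<ge>k. n i = 0)"

definition k_graph ::
  "nat \<Rightarrow> 'a set \<Rightarrow> 'a set \<Rightarrow> ('a \<Rightarrow> 'a) \<Rightarrow> ('a \<Rightarrow> 'a) \<Rightarrow> ('a \<Rightarrow> 'a \<Rightarrow> 'a)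
     \<Rightarrow> ('a \<Rightarrow> nat \<Rightarrow> nat) \<Rightarrow> bool" where
  "k_graph k Mor Obj r s cmp d \<longleftrightarrow>
     countable Mor \<and> Obj \<subseteq> Mor \<and>
     (\<forall>l\<in>Mor. r l \<in> Obj \<and> s l \<in> Obj) \<and>
     (\<forall>v\<in>Obj. r v = v \<and> s v = v) \<and>
     (\<forall>l\<in>Mor. cmp (r l) l = l \<and> cmp l (s l) = l) \<and>
     (\<forall>l\<in>Mor. \<forall>m\<in>Mor. s l = r m \<longrightarrow>
        cmp l m \<in> Mor \<and> r (cmp l m) = r l \<and> s (cmp l m) = s m) \<and>
     (\<forall>l\<in>Mor. \<forall>m\<in>Mor. \<forall>n\<in>Mor. s l = r m \<longrightarrow> s m = r n \<longrightarrow>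
        cmp (cmp l m) n = cmp l (cmp m n)) \<and>
     (\<forall>l\<in>Mor. in_Nk k (d l)) \<and>
     (\<forall>v\<in>Obj. d v = (\<lambda>_. 0)) \<and>
     (\<forall>l\<in>Mor. \<forall>m\<in>Mor. s l = r m \<longrightarrow> d (cmp l m) = (\<lambda>i. d l i + d m i)) \<and>
     (\<forall>l\<in>Mor. \<forall>m n. in_Nk k m \<longrightarrow> in_Nk k n \<longrightarrow> d l = (\<lambda>i. m i + n i) \<longrightarrow>
        (\<exists>!(mu, nu). mu \<in> Mor \<and> nu \<in> Mor \<and> s mu = r nu \<and>
            d mu = m \<and> d nu = n \<and> l = cmp mu nu))"

definition MCE ::
  "'a set \<Rightarrow> ('a \<Rightarrow> 'a) \<Rightarrow> ('a \<Rightarrow> 'a) \<Rightarrow> ('a \<Rightarrow> 'a \<Rightarrow> 'a) \<Rightarrow> ('a \<Rightarrow> nat \<Rightarrow> nat)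
     \<Rightarrow> 'a \<Rightarrow> 'a \<Rightarrow> ('a \<times> 'a) set" where
  "MCE Mor r s cmp d l m =
     {(a, b). a \<in> Mor \<and> b \<in> Mor \<and> s l = r a \<and> s m = r b \<and>
              cmp l a = cmp m b \<and> d (cmp l a) = sup (d l) (d m)}"

definition finitely_aligned ::
  "'a set \<Rightarrow> ('a \<Rightarrow> 'a) \<Rightarrow> ('a \<Rightarrow> 'a) \<Rightarrow> ('a \<Rightarrow> 'a \<Rightarrow> 'a) \<Rightarrow> ('a \<Rightarrow> nat \<Rightarrow> nat) \<Rightarrow> bool" where
  "finitely_aligned Mor r s cmp d \<longleftrightarrow>
     (\<forall>l\<in>Mor. \<forall>m\<in>Mor. finite (MCE Mor r s cmp d l m))"

definition S_Lambda ::
  "'a set \<Rightarrow> ('a \<Rightarrow> 'a) \<Rightarrow> ('a \<Rightarrow> 'a) \<Rightarrow> ('a \<Rightarrow> 'a \<Rightarrow> 'a) \<Rightarrow> ('a \<Rightarrow> nat \<Rightarrow> nat)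
     \<Rightarrow> ('a \<times> 'a) set set" where
  "S_Lambda Mor r s cmp d =
     {F. finite F \<and> F \<subseteq> {(l, m). l \<in> Mor \<and> m \<in> Mor \<and> s l = s m} \<and>
         (\<forall>(l, m)\<in>F. \<forall>(n, w)\<in>F. (l, m) \<noteq> (n, w) \<longrightarrow>
             MCE Mor r s cmp d l n = {} \<and> MCE Mor r s cmp d m w = {})}"

text \<open>A path is a pair (m, x): m in (N u {infinity})^k (an enat-valued function vanishing
  at indices >= k) and x the action of the functor on the morphisms (p,q), p <= q <= m, of
  Omega_{k,m}; outside this domain x is fixed to undefined.\<close>

definition Omega_dom :: "(nat \<Rightarrow> enat) \<Rightarrow> ((nat \<Rightarrow> nat) \<times> (nat \<Rightarrow> nat)) set" where
  "Omega_dom m = {(p, q). p \<le> q \<and> (\<forall>i. enat (q i) \<le> m i)}"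

definition X_Lambda ::
  "nat \<Rightarrow> 'a set \<Rightarrow> 'a set \<Rightarrow> ('a \<Rightarrow> 'a) \<Rightarrow> ('a \<Rightarrow> 'a) \<Rightarrow> ('a \<Rightarrow> 'a \<Rightarrow> 'a)
     \<Rightarrow> ('a \<Rightarrow> nat \<Rightarrow> nat)
     \<Rightarrow> ((nat \<Rightarrow> enat) \<times> ((nat \<Rightarrow> nat) \<times> (nat \<Rightarrow> nat) \<Rightarrow> 'a)) set" where
  "X_Lambda k Mor Obj r s cmp d =
     {(m, x). (\<forall>i\<ge>k. m i = 0) \<and>
        (\<forall>pq. pq \<notin> Omega_dom m \<longrightarrow> x pq = undefined) \<and>
        (\<forall>(p, q)\<in>Omega_dom m.
            x (p, q) \<in> Mor \<and> d (x (p, q)) = (\<lambda>i. q i - p i) \<and>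
            r (x (p, q)) = x (p, p) \<and> s (x (p, q)) = x (q, q)) \<and>
        (\<forall>p. (p, p) \<in> Omega_dom m \<longrightarrow> x (p, p) \<in> Obj) \<and>
        (\<forall>p q t. (p, q) \<in> Omega_dom m \<longrightarrow> (q, t) \<in> Omega_dom m \<longrightarrow>
            cmp (x (p, q)) (x (q, t)) = x (p, t))}"

definition D_set ::
  "nat \<Rightarrow> 'a set \<Rightarrow> 'a set \<Rightarrow> ('a \<Rightarrow> 'a) \<Rightarrow> ('a \<Rightarrow> 'a) \<Rightarrow> ('a \<Rightarrow> 'a \<Rightarrow> 'a)
     \<Rightarrow> ('a \<Rightarrow> nat \<Rightarrow> nat) \<Rightarrow> ('a \<times> 'a) set
     \<Rightarrow> ((nat \<Rightarrow> enat) \<times> ((nat \<Rightarrow> nat) \<times> (nat \<Rightarrow> nat) \<Rightarrow> 'a)) set" where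
  "D_set k Mor Obj r s cmp d F =
     {(m, x) \<in> X_Lambda k Mor Obj r s cmp d.
        \<exists>(l, mu)\<in>F. (\<forall>i. enat (d mu i) \<le> m i) \<and> x (\<lambda>_. 0, d mu) = mu}"

definition path_topology ::
  "nat \<Rightarrow> 'a set \<Rightarrow> 'a set \<Rightarrow> ('a \<Rightarrow> 'a) \<Rightarrow> ('a \<Rightarrow> 'a) \<Rightarrow> ('a \<Rightarrow> 'a \<Rightarrow> 'a)
     \<Rightarrow> ('a \<Rightarrow> nat \<Rightarrow> nat)
     \<Rightarrow> ((nat \<Rightarrow> enat) \<times> ((nat \<Rightarrow> nat) \<times> (nat \<Rightarrow> nat) \<Rightarrow> 'a)) topology" where
  "path_topology k Mor Obj r s cmp d =
     topology_generated_by
       (insert (X_Lambda k Mor Obj r s cmp d)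
         (\<Union>G\<in>S_Lambda Mor r s cmp d.
            {D_set k Mor Obj r s cmp d G,
             X_Lambda k Mor Obj r s cmp d - D_set k Mor Obj r s cmp d G}))"

end

theory Submission
  imports Defs
begin


locale kg =
  fixes k :: nat and Mor Obj :: "'a set" and r s :: "'a \<Rightarrow> 'a"
    and cmp :: "'a \<Rightarrow> 'a \<Rightarrow> 'a" and d :: "'a \<Rightarrow> nat \<Rightarrow> nat"
  assumes kg: "k_graph k Mor Obj r s cmp d"
begin

lemma kgc_all: "(Obj \<subseteq> Mor) \<and>
     (\<forall>l\<in>Mor. r l \<in> Obj \<and> s l \<in> Obj) \<and>
     (\<forall>v\<in>Obj. r v = v \<and> s v = v) \<and>
     (\<forall>l\<in>Mor. cmp (r l) l = l \<and> cmp l (s l) = l) \<and>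
     (\<forall>l\<in>Mor. \<forall>m\<in>Mor. s l = r m \<longrightarrow>
        cmp l m \<in> Mor \<and> r (cmp l m) = r l \<and> s (cmp l m) = s m) \<and>
     (\<forall>l\<in>Mor. \<forall>m\<in>Mor. \<forall>n\<in>Mor. s l = r m \<longrightarrow> s m = r n \<longrightarrow>
        cmp (cmp l m) n = cmp l (cmp m n)) \<and>
     (\<forall>l\<in>Mor. in_Nk k (d l)) \<and>
     (\<forall>v\<in>Obj. d v = (\<lambda>_. 0)) \<and>
     (\<forall>l\<in>Mor. \<forall>m\<in>Mor. s l = r m \<longrightarrow> d (cmp l m) = (\<lambda>i. d l i + d m i)) \<and>
     (\<forall>l\<in>Mor. \<forall>m n. in_Nk k m \<longrightarrow> in_Nk k n \<longrightarrow> d l = (\<lambda>i. m i + n i) \<longrightarrow>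
        (\<exists>!(mu, nu). mu \<in> Mor \<and> nu \<in> Mor \<and> s mu = r nu \<and>
            d mu = m \<and> d nu = n \<and> l = cmp mu nu))"
  using kg unfolding k_graph_def by (elim conjE) (intro conjI; assumption)

lemmas kgc = kgc_all[THEN conjunct1] kgc_all[THEN conjunct2, THEN conjunct1] kgc_all[THEN conjunct2, THEN conjunct2, THEN conjunct1] kgc_all[THEN conjunct2, THEN conjunct2, THEN conjunct2, THEN conjunct1] kgc_all[THEN conjunct2, THEN conjunct2, THEN conjunct2, THEN conjunct2, THEN conjunct1] kgc_all[THEN conjunct2, THEN conjunct2, THEN conjunct2, THEN conjunct2, THEN conjunct2, THEN conjunct1] kgc_all[THEN conjunct2, THEN conjunct2, THEN conjunct2, THEN conjunct2, THEN conjunct2, THEN conjunct2, THEN conjunct1] kgc_all[THEN conjunct2, THEN conjunct2, THEN conjunct2, THEN conjunct2, THEN conjunct2, THEN conjunct2, THEN conjunct2, THEN conjunct1] kgc_all[THEN conjunct2, THEN conjunct2, THEN conjunct2, THEN conjunct2, THEN conjunct2, THEN conjunct2, THEN conjunct2, THEN conjunct2, THEN conjunct1] kgc_all[THEN conjunct2, THEN conjunct2, THEN conjunct2, THEN conjunct2, THEN conjunct2, THEN conjunct2, THEN conjunct2, THEN conjunct2, THEN conjunct2]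


lemma obj_sub: "v \<in> Obj \<Longrightarrow> v \<in> Mor" using kgc(1) by blast
lemma r_obj: "l \<in> Mor \<Longrightarrow> r l \<in> Obj" using kgc(2) by blast
lemma s_obj: "l \<in> Mor \<Longrightarrow> s l \<in> Obj" using kgc(2) by blast
lemma obj_r: "v \<in> Obj \<Longrightarrow> r v = v" using kgc(3) by blast
lemma obj_s: "v \<in> Obj \<Longrightarrow> s v = v" using kgc(3) by blast
lemma id_l: "l \<in> Mor \<Longrightarrow> cmp (r l) l = l" using kgc(4) by blast
lemma id_r: "l \<in> Mor \<Longrightarrow> cmp l (s l) = l" using kgc(4) by blast
lemma cmp_mor: "l \<in> Mor \<Longrightarrow> m \<in> Mor \<Longrightarrow> s l = r m \<Longrightarrow> cmp l m \<in> Mor"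
  using kgc(5) by blast
lemma cmp_r: "l \<in> Mor \<Longrightarrow> m \<in> Mor \<Longrightarrow> s l = r m \<Longrightarrow> r (cmp l m) = r l"
  using kgc(5) by blast
lemma cmp_s: "l \<in> Mor \<Longrightarrow> m \<in> Mor \<Longrightarrow> s l = r m \<Longrightarrow> s (cmp l m) = s m"
  using kgc(5) by blast
lemma assoc: "l \<in> Mor \<Longrightarrow> m \<in> Mor \<Longrightarrow> n \<in> Mor \<Longrightarrow> s l = r m \<Longrightarrow> s m = r n \<Longrightarrow>
        cmp (cmp l m) n = cmp l (cmp m n)"
  using kgc(6) by blast
lemma d_Nk: "l \<in> Mor \<Longrightarrow> in_Nk k (d l)" using kgc(7) by blast
lemma d_obj: "v \<in> Obj \<Longrightarrow> d v = (\<lambda>_. 0)" using kgc(8) by blast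
lemma d_cmp: "l \<in> Mor \<Longrightarrow> m \<in> Mor \<Longrightarrow> s l = r m \<Longrightarrow> d (cmp l m) = (\<lambda>i. d l i + d m i)"
  using kgc(9) by blast
lemma fact: "l \<in> Mor \<Longrightarrow> in_Nk k m \<Longrightarrow> in_Nk k n \<Longrightarrow> d l = (\<lambda>i. m i + n i) \<Longrightarrow>
        (\<exists>!(mu, nu). mu \<in> Mor \<and> nu \<in> Mor \<and> s mu = r nu \<and>
            d mu = m \<and> d nu = n \<and> l = cmp mu nu)"
  using kgc(10) by blast

lemma fact_ex:
  assumes "l \<in> Mor" "in_Nk k m" "in_Nk k n" "d l = (\<lambda>i. m i + n i)"
  obtains mu nu where "mu \<in> Mor" "nu \<in> Mor" "s mu = r nu" "d mu = m" "d nu = n" "l = cmp mu nu"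
  using fact[OF assms] by blast

lemma fact_uniq:
  assumes "a \<in> Mor" "b \<in> Mor" "a' \<in> Mor" "b' \<in> Mor" "s a = r b" "s a' = r b'"
    "d a = d a'" "cmp a b = cmp a' b'"
  shows "a = a' \<and> b = b'"
proof -
  have "d (cmp a b) = (\<lambda>i. d a i + d b i)" using d_cmp assms by blast
  moreover have "d (cmp a' b') = (\<lambda>i. d a' i + d b' i)" using d_cmp assms by blast
  ultimately have "\<forall>i. d a i + d b i = d a' i + d b' i" using assms(7,8) by metis
  then have db: "d b = d b'" using assms(7) by (simp add: fun_eq_iff)
  have l: "cmp a b \<in> Mor" using cmp_mor assms by blast
  define P where "P = (\<lambda>(mu, nu). mu \<in> Mor \<and> nu \<in> Mor \<and> s mu = r nu \<and>
            d mu = d a \<and> d nu = d b \<and> cmp a b = cmp mu nu)"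
  have "\<exists>!z. P z" unfolding P_def
    by (rule fact[OF l d_Nk[OF assms(1)] d_Nk[OF assms(2)]]) (rule d_cmp, use assms in auto)
  then obtain z where z: "\<And>y. P y \<Longrightarrow> y = z" by blast
  have "P (a, b)" unfolding P_def using assms by simp
  moreover have "P (a', b')" unfolding P_def using assms db by simp
  ultimately have "(a, b) = (a', b')" using z by metis
  then show ?thesis by simp
qed

lemma cancel_left:
  assumes "a \<in> Mor" "b \<in> Mor" "b' \<in> Mor" "s a = r b" "s a = r b'" "cmp a b = cmp a b'"
  shows "b = b'"
  using fact_uniq[of a b a b'] assms by blast


lemma Omega_dom_iff: "(p, q) \<in> Omega_dom m \<longleftrightarrow> p \<le> q \<and> (\<forall>i. enat (q i) \<le> m i)"
  by (simp add: Omega_dom_def)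

abbreviation XX where "XX \<equiv> X_Lambda k Mor Obj r s cmp d"

definition Zs :: "'a \<Rightarrow> ((nat \<Rightarrow> enat) \<times> ((nat \<Rightarrow> nat) \<times> (nat \<Rightarrow> nat) \<Rightarrow> 'a)) set" where
  "Zs nu = {(m, x) \<in> XX. (\<forall>i. enat (d nu i) \<le> m i) \<and> x (\<lambda>_. 0, d nu) = nu}"

lemma path_dom:
  assumes "(m, x) \<in> XX" "(p, q) \<in> Omega_dom m"
  shows "x (p, q) \<in> Mor" "d (x (p, q)) = (\<lambda>i. q i - p i)" "r (x (p, q)) = x (p, p)"
    "s (x (p, q)) = x (q, q)"
  using assms unfolding X_Lambda_def by auto

lemma path_cmp:
  assumes "(m, x) \<in> XX" "(p, q) \<in> Omega_dom m" "(q, t) \<in> Omega_dom m"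
  shows "cmp (x (p, q)) (x (q, t)) = x (p, t)"
  using assms unfolding X_Lambda_def by blast

lemma Zs_prefix:
  assumes y: "y \<in> Zs rho" and ab: "a \<in> Mor" "b \<in> Mor" "s a = r b" "rho = cmp a b"
  shows "y \<in> Zs a"
proof -
  obtain m x where yy: "y = (m, x)" by force
  have X: "(m, x) \<in> XX" and le: "\<forall>i. enat (d rho i) \<le> m i" and x0: "x (\<lambda>_. 0, d rho) = rho"
    using y yy unfolding Zs_def by auto
  have drho: "d rho = (\<lambda>i. d a i + d b i)" using d_cmp ab by blast
  let ?z = "(\<lambda>_. 0) :: nat \<Rightarrow> nat"
  have lea: "\<forall>i. enat (d a i) \<le> m i"
  proof
    fix i have "enat (d a i) \<le> enat (d rho i)" using drho by simp
    then show "enat (d a i) \<le> m i" using le order_trans by blast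
  qed
  have o1: "(?z, d a) \<in> Omega_dom m" using lea by (simp add: Omega_dom_iff le_fun_def)
  have o2: "(d a, d rho) \<in> Omega_dom m" using le by (simp add: Omega_dom_iff le_fun_def drho)
  have c: "cmp (x (?z, d a)) (x (d a, d rho)) = rho" using path_cmp[OF X o1 o2] x0 by simp
  have "x (?z, d a) = a"
  proof -
    have "x (?z, d a) = a \<and> x (d a, d rho) = b"
    proof (rule fact_uniq)
      show "x (?z, d a) \<in> Mor" "x (d a, d rho) \<in> Mor" using path_dom[OF X o1] path_dom[OF X o2] by auto
      show "s (x (?z, d a)) = r (x (d a, d rho))" using path_dom[OF X o1] path_dom[OF X o2] by auto
      show "d (x (?z, d a)) = d a" using path_dom[OF X o1] by simp
    qed (use ab c in auto)
    then show ?thesis by simp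
  qed
  then show ?thesis using X lea yy unfolding Zs_def by auto
qed

lemma Zs_join:
  assumes y1: "(m, x) \<in> Zs n1" and y2: "(m, x) \<in> Zs n2" and n: "n = sup (d n1) (d n2)"
  shows "x (\<lambda>_. 0, n) \<in> (\<lambda>(a, b). cmp n1 a) ` MCE Mor r s cmp d n1 n2"
    "(m, x) \<in> Zs (x (\<lambda>_. 0, n))" "d (x (\<lambda>_. 0, n)) = n"
proof -
  let ?z = "(\<lambda>_. 0) :: nat \<Rightarrow> nat"
  have X: "(m, x) \<in> XX" and le1: "\<forall>i. enat (d n1 i) \<le> m i" and x1: "x (?z, d n1) = n1"
    and le2: "\<forall>i. enat (d n2 i) \<le> m i" and x2: "x (?z, d n2) = n2"
    using y1 y2 unfolding Zs_def by auto
  have ni: "\<And>i. n i = max (d n1 i) (d n2 i)" using n by (simp add: sup_nat_def)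
  have len: "\<forall>i. enat (n i) \<le> m i" using le1 le2 ni by (metis max_def)
  have o0: "(?z, n) \<in> Omega_dom m" using len by (simp add: Omega_dom_iff le_fun_def)
  have o1: "(?z, d n1) \<in> Omega_dom m" using le1 by (simp add: Omega_dom_iff le_fun_def)
  have o2: "(?z, d n2) \<in> Omega_dom m" using le2 by (simp add: Omega_dom_iff le_fun_def)
  have o1n: "(d n1, n) \<in> Omega_dom m" using len ni by (simp add: Omega_dom_iff le_fun_def)
  have o2n: "(d n2, n) \<in> Omega_dom m" using len ni by (simp add: Omega_dom_iff le_fun_def)
  have dn: "d (x (?z, n)) = n" using path_dom(2)[OF X o0] by simp
  show "d (x (?z, n)) = n" by (rule dn)
  have c1: "cmp n1 (x (d n1, n)) = x (?z, n)" using path_cmp[OF X o1 o1n] x1 by simp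
  have c2: "cmp n2 (x (d n2, n)) = x (?z, n)" using path_cmp[OF X o2 o2n] x2 by simp
  have "(x (d n1, n), x (d n2, n)) \<in> MCE Mor r s cmp d n1 n2"
    unfolding MCE_def using path_dom[OF X o1n] path_dom[OF X o2n] path_dom[OF X o1] path_dom[OF X o2]
      x1 x2 c1 c2 dn n by auto
  then show "x (?z, n) \<in> (\<lambda>(a, b). cmp n1 a) ` MCE Mor r s cmp d n1 n2"
    using c1 by force
  show "(m, x) \<in> Zs (x (?z, n))" using X len dn unfolding Zs_def by auto
qed


lemma enat_le_SUP:
  assumes "enat n \<le> (SUP v\<in>A. enat (f v))" "A \<noteq> {}"
  shows "\<exists>v\<in>A. n \<le> f v"
proof (rule ccontr)
  assume "\<not> ?thesis"
  then have lt: "\<forall>v\<in>A. f v < n" by auto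
  then have "n > 0" using assms(2) by auto
  have "(SUP v\<in>A. enat (f v)) \<le> enat (n - 1)"
    by (rule SUP_least) (use lt in auto)
  with assms(1) have "enat n \<le> enat (n - 1)" by (rule order_trans)
  then show False using \<open>n > 0\<close> by simp
qed

context
  fixes chi :: "'a \<Rightarrow> bool" and Q
  assumes FA: "finitely_aligned Mor r s cmp d"
    and C: "\<And>K. finite K \<Longrightarrow> K \<subseteq> Mor \<Longrightarrow> \<exists>y\<in>Q. \<forall>v\<in>K. (y \<in> Zs v) = chi v"
    and Tne: "\<exists>v\<in>Mor. chi v"
begin

lemma T_pre:
  assumes "rho \<in> Mor" "chi rho" "a \<in> Mor" "b \<in> Mor" "s a = r b" "rho = cmp a b"
  shows "chi a"
proof -
  obtain y where "\<forall>v\<in>{rho, a}. (y \<in> Zs v) = chi v" using C[of "{rho, a}"] assms by auto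
  then show ?thesis using Zs_prefix[of y rho a b] assms by auto
qed

lemma T_uniq:
  assumes "v \<in> Mor" "chi v" "w \<in> Mor" "chi w" "d v = d w"
  shows "v = w"
proof -
  obtain y where "\<forall>u\<in>{v, w}. (y \<in> Zs u) = chi u" using C[of "{v, w}"] assms by auto
  then have "y \<in> Zs v" "y \<in> Zs w" using assms by auto
  then show ?thesis using assms(5) unfolding Zs_def by auto
qed

lemma T_dir:
  assumes "n1 \<in> Mor" "chi n1" "n2 \<in> Mor" "chi n2"
  shows "\<exists>rho\<in>Mor. chi rho \<and> (\<forall>i. d n1 i \<le> d rho i) \<and> (\<forall>i. d n2 i \<le> d rho i)"
proof -
  define R where "R = (\<lambda>(a, b). cmp n1 a) ` MCE Mor r s cmp d n1 n2"
  have fR: "finite R" using FA assms unfolding finitely_aligned_def R_def by auto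
  have RM: "R \<subseteq> Mor" unfolding R_def MCE_def using cmp_mor assms by auto
  obtain y where yQ: "y \<in> Q" and ag: "\<forall>v\<in>{n1, n2} \<union> R. (y \<in> Zs v) = chi v"
    using C[of "{n1, n2} \<union> R"] fR RM assms by auto
  obtain m x where yy: "y = (m, x)" by force
  have z1: "(m, x) \<in> Zs n1" "(m, x) \<in> Zs n2" using ag assms yy by auto
  define n where "n = sup (d n1) (d n2)"
  note J = Zs_join[OF z1 n_def]
  have "chi (x (\<lambda>_. 0, n))" using ag J(1,2) yy unfolding R_def by auto
  moreover have "x (\<lambda>_. 0, n) \<in> Mor" using J(1) RM unfolding R_def by auto
  ultimately show ?thesis using J(3) by (intro bexI[of _ "x (\<lambda>_. 0, n)"]) (auto simp: n_def sup_nat_def)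
qed

lemma T_findir:
  assumes "finite A" "\<forall>v\<in>A. v \<in> Mor \<and> chi v"
  shows "\<exists>rho\<in>Mor. chi rho \<and> (\<forall>v\<in>A. \<forall>i. d v i \<le> d rho i)"
  using assms
proof (induction A rule: finite_induct)
  case empty
  then show ?case using Tne by auto
next
  case (insert v A)
  then obtain rho where rho: "rho \<in> Mor" "chi rho" "\<forall>u\<in>A. \<forall>i. d u i \<le> d rho i" by auto
  obtain rho' where "rho' \<in> Mor" "chi rho'" "\<forall>i. d v i \<le> d rho' i" "\<forall>i. d rho i \<le> d rho' i"
    using T_dir[of v rho] insert rho by auto
  then show ?case using rho le_trans by blast
qed

definition MM :: "nat \<Rightarrow> enat" where
  "MM i = (SUP v\<in>{v \<in> Mor. chi v}. enat (d v i))"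

lemma MM_upper: "v \<in> Mor \<Longrightarrow> chi v \<Longrightarrow> enat (d v i) \<le> MM i"
  unfolding MM_def by (rule SUP_upper) auto

lemma MM_zero: "i \<ge> k \<Longrightarrow> MM i = 0"
proof -
  assume "i \<ge> k"
  then have "MM i \<le> 0" unfolding MM_def
    by (intro SUP_least) (use d_Nk in \<open>auto simp: in_Nk_def zero_enat_def\<close>)
  then show ?thesis by simp
qed

lemma T_cofinal:
  assumes "\<forall>i. enat (q i) \<le> MM i"
  shows "\<exists>rho\<in>Mor. chi rho \<and> (\<forall>i. q i \<le> d rho i)"
proof -
  have "\<forall>i. \<exists>v. v \<in> Mor \<and> chi v \<and> q i \<le> d v i"
    using enat_le_SUP assms Tne unfolding MM_def by fastforce
  then obtain g where g: "\<And>i. g i \<in> Mor \<and> chi (g i) \<and> q i \<le> d (g i) i" by metis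
  obtain rho where rho: "rho \<in> Mor" "chi rho" "\<forall>v\<in>g ` {..<k}. \<forall>i. d v i \<le> d rho i"
    using T_findir[of "g ` {..<k}"] g by auto
  have "q i \<le> d rho i" for i
  proof (cases "i < k")
    case True
    then show ?thesis using g[of i] rho(3) by (meson imageI lessThan_iff order_trans)
  next
    case False
    then have "MM i = 0" using MM_zero by simp
    then have "enat (q i) \<le> enat 0" using assms zero_enat_def by metis
    then show ?thesis by simp
  qed
  then show ?thesis using rho by auto
qed

lemma T_exdeg:
  assumes "\<forall>i. enat (q i) \<le> MM i"
  shows "\<exists>v\<in>Mor. chi v \<and> d v = q"
proof -
  obtain rho where rho: "rho \<in> Mor" "chi rho" "\<forall>i. q i \<le> d rho i" using T_cofinal assms by blast
  have nk: "in_Nk k (d rho)" using d_Nk rho by blast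
  have q: "in_Nk k q" using nk rho(3) unfolding in_Nk_def by (metis le_zero_eq)
  have q2: "in_Nk k (\<lambda>i. d rho i - q i)" using nk unfolding in_Nk_def by simp
  have "d rho = (\<lambda>i. q i + (d rho i - q i))" using rho(3) by auto
  then obtain a b where ab: "a \<in> Mor" "b \<in> Mor" "s a = r b" "d a = q" "rho = cmp a b"
    using fact_ex[OF rho(1) q q2] by metis
  then show ?thesis using T_pre[OF rho(1,2)] by blast
qed

definition tt where "tt q = (THE v. v \<in> Mor \<and> chi v \<and> d v = q)"

lemma tt_prop:
  assumes "\<forall>i. enat (q i) \<le> MM i"
  shows "tt q \<in> Mor" "chi (tt q)" "d (tt q) = q"
proof -
  have "\<exists>!v. v \<in> Mor \<and> chi v \<and> d v = q"
    using T_exdeg[OF assms] T_uniq by blast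
  from theI'[OF this] show "tt q \<in> Mor" "chi (tt q)" "d (tt q) = q" unfolding tt_def by auto
qed

lemma tt_eq:
  assumes "v \<in> Mor" "chi v"
  shows "tt (d v) = v"
proof -
  have "\<forall>i. enat (d v i) \<le> MM i" using MM_upper assms by blast
  from tt_prop[OF this] show ?thesis using T_uniq assms by blast
qed


lemma tt_pre:
  assumes pq: "p \<le> q" and qM: "\<forall>i. enat (q i) \<le> MM i"
  shows "\<exists>b\<in>Mor. s (tt p) = r b \<and> tt q = cmp (tt p) b \<and> d b = (\<lambda>i. q i - p i)"
proof -
  have pM: "\<forall>i. enat (p i) \<le> MM i" using pq qM unfolding le_fun_def
    by (meson enat_ord_simps(1) order_trans)
  note Q = tt_prop[OF qM] and P = tt_prop[OF pM]
  have nkq: "in_Nk k q" using d_Nk[OF Q(1)] Q(3) by simp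
  have nkp: "in_Nk k p" using nkq pq unfolding in_Nk_def le_fun_def by (metis le_zero_eq)
  have nk2: "in_Nk k (\<lambda>i. q i - p i)" using nkq unfolding in_Nk_def by simp
  have "d (tt q) = (\<lambda>i. p i + (q i - p i))" using Q(3) pq unfolding le_fun_def by auto
  then obtain a b where ab: "a \<in> Mor" "b \<in> Mor" "s a = r b" "d a = p" "d b = (\<lambda>i. q i - p i)"
      "tt q = cmp a b"
    using fact_ex[OF Q(1) nkp nk2] by metis
  have "chi a" using T_pre[OF Q(1,2) ab(1,2,3,6)] .
  then have "a = tt p" using T_uniq[OF ab(1) _ P(1,2)] ab(4) P(3) by simp
  then show ?thesis using ab by blast
qed

definition xf where
  "xf = (\<lambda>(p, q). if (p, q) \<in> Omega_dom MM then (THE b. b \<in> Mor \<and> s (tt p) = r b \<and> tt q = cmp (tt p) b)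
          else undefined)"

lemma xf_prop:
  assumes "(p, q) \<in> Omega_dom MM"
  shows "xf (p, q) \<in> Mor" "s (tt p) = r (xf (p, q))" "tt q = cmp (tt p) (xf (p, q))"
    "d (xf (p, q)) = (\<lambda>i. q i - p i)"
proof -
  have pq: "p \<le> q" and qM: "\<forall>i. enat (q i) \<le> MM i" using assms by (auto simp: Omega_dom_iff)
  have pM: "\<forall>i. enat (p i) \<le> MM i" using pq qM unfolding le_fun_def
    by (meson enat_ord_simps(1) order_trans)
  obtain b where b: "b \<in> Mor" "s (tt p) = r b" "tt q = cmp (tt p) b" "d b = (\<lambda>i. q i - p i)"
    using tt_pre[OF pq qM] by blast
  have "xf (p, q) = b" unfolding xf_def using assms
    apply simp
    apply (rule the_equality)
    using b cancel_left[OF tt_prop(1)[OF pM]] apply auto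
    done
  then show "xf (p, q) \<in> Mor" "s (tt p) = r (xf (p, q))" "tt q = cmp (tt p) (xf (p, q))"
    "d (xf (p, q)) = (\<lambda>i. q i - p i)" using b by auto
qed

lemma xf_pp:
  assumes "(p, p) \<in> Omega_dom MM"
  shows "xf (p, p) = s (tt p)"
proof -
  have pM: "\<forall>i. enat (p i) \<le> MM i" using assms by (auto simp: Omega_dom_iff)
  note P = tt_prop[OF pM]
  have so: "s (tt p) \<in> Obj" using s_obj P(1) by blast
  show ?thesis
  proof (rule cancel_left[OF P(1)])
    show "xf (p, p) \<in> Mor" "s (tt p) = r (xf (p, p))" using xf_prop[OF assms] by auto
    show "s (tt p) \<in> Mor" using so obj_sub by blast
    show "s (tt p) = r (s (tt p))" using so obj_r by simp
    show "cmp (tt p) (xf (p, p)) = cmp (tt p) (s (tt p))"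
      using xf_prop(3)[OF assms] id_r[OF P(1)] by simp
  qed
qed

lemma xf_0:
  assumes qM: "\<forall>i. enat (q i) \<le> MM i"
  shows "xf (\<lambda>_. 0, q) = tt q"
proof -
  let ?z = "(\<lambda>_. 0) :: nat \<Rightarrow> nat"
  have o: "(?z, q) \<in> Omega_dom MM" using qM by (simp add: Omega_dom_iff le_fun_def)
  have zM: "\<forall>i. enat (?z i) \<le> MM i" by (simp add: zero_enat_def[symmetric])
  note Q = tt_prop[OF qM] and Z = tt_prop[OF zM]
  have ro: "r (tt q) \<in> Obj" using r_obj Q(1) by blast
  have rm: "r (tt q) \<in> Mor" using ro obj_sub by blast
  have "chi (r (tt q))"
    by (rule T_pre[OF Q(1,2) rm Q(1)]) (use ro obj_s id_l[OF Q(1)] in auto)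
  then have tz: "tt ?z = r (tt q)" using T_uniq[OF Z(1,2) rm] Z(3) d_obj[OF ro] by simp
  show ?thesis
  proof (rule cancel_left[OF Z(1)])
    show "xf (?z, q) \<in> Mor" "s (tt ?z) = r (xf (?z, q))" using xf_prop[OF o] by auto
    show "tt q \<in> Mor" by (rule Q(1))
    show "s (tt ?z) = r (tt q)" using tz ro obj_s by simp
    show "cmp (tt ?z) (xf (?z, q)) = cmp (tt ?z) (tt q)"
      using xf_prop(3)[OF o] tz id_l[OF Q(1)] by simp
  qed
qed

lemma limit_in_X: "(MM, xf) \<in> XX"
proof -
  have A1: "\<forall>i\<ge>k. MM i = 0" using MM_zero by blast
  have A2: "\<forall>pq. pq \<notin> Omega_dom MM \<longrightarrow> xf pq = undefined" unfolding xf_def by auto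
  have A3: "xf (p, q) \<in> Mor \<and> d (xf (p, q)) = (\<lambda>i. q i - p i) \<and>
            r (xf (p, q)) = xf (p, p) \<and> s (xf (p, q)) = xf (q, q)"
    if o: "(p, q) \<in> Omega_dom MM" for p q
  proof -
    have opp: "(p, p) \<in> Omega_dom MM" and oqq: "(q, q) \<in> Omega_dom MM" using o
      by (auto simp: Omega_dom_iff le_fun_def) (meson enat_ord_simps(1) order_trans)
    have pM: "\<forall>i. enat (p i) \<le> MM i" using opp by (auto simp: Omega_dom_iff)
    note X = xf_prop[OF o]
    have "s (tt q) = s (xf (p, q))" using X(3) cmp_s[OF tt_prop(1)[OF pM] X(1) X(2)] by simp
    then show ?thesis using X xf_pp[OF opp] xf_pp[OF oqq] by simp
  qed
  have A4: "xf (p, p) \<in> Obj" if o: "(p, p) \<in> Omega_dom MM" for p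
  proof -
    have pM: "\<forall>i. enat (p i) \<le> MM i" using o by (auto simp: Omega_dom_iff)
    show ?thesis using xf_pp[OF o] s_obj tt_prop(1)[OF pM] by simp
  qed
  have A5: "cmp (xf (p, q)) (xf (q, t)) = xf (p, t)"
    if o1: "(p, q) \<in> Omega_dom MM" and o2: "(q, t) \<in> Omega_dom MM" for p q t
  proof -
    have o3: "(p, t) \<in> Omega_dom MM" using o1 o2 by (auto simp: Omega_dom_iff)
    have pM: "\<forall>i. enat (p i) \<le> MM i" using o1 by (auto simp: Omega_dom_iff le_fun_def)
        (meson enat_ord_simps(1) order_trans)
    have qM: "\<forall>i. enat (q i) \<le> MM i" using o1 by (auto simp: Omega_dom_iff)
    note X1 = xf_prop[OF o1] and X2 = xf_prop[OF o2] and X3 = xf_prop[OF o3]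
    have s1: "s (xf (p, q)) = r (xf (q, t))" using X2(2) X1(3) cmp_s[OF tt_prop(1)[OF pM] X1(1) X1(2)]
      by simp
    have "tt t = cmp (cmp (tt p) (xf (p, q))) (xf (q, t))" using X1(3) X2(3) by simp
    also have "\<dots> = cmp (tt p) (cmp (xf (p, q)) (xf (q, t)))"
      using assoc[OF tt_prop(1)[OF pM] X1(1) X2(1) X1(2) s1] .
    finally have e: "tt t = cmp (tt p) (cmp (xf (p, q)) (xf (q, t)))" .
    show ?thesis
    proof (rule cancel_left[OF tt_prop(1)[OF pM]])
      show "cmp (xf (p, q)) (xf (q, t)) \<in> Mor" using cmp_mor X1(1) X2(1) s1 by blast
      show "s (tt p) = r (cmp (xf (p, q)) (xf (q, t)))" using cmp_r[OF X1(1) X2(1) s1] X1(2) by simp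
      show "xf (p, t) \<in> Mor" "s (tt p) = r (xf (p, t))" using X3 by auto
      show "cmp (tt p) (cmp (xf (p, q)) (xf (q, t))) = cmp (tt p) (xf (p, t))" using e X3(3) by simp
    qed
  qed
  show ?thesis unfolding X_Lambda_def using A1 A2 A3 A4 A5 by auto
qed

lemma limit_Zs: "v \<in> Mor \<Longrightarrow> (MM, xf) \<in> Zs v \<longleftrightarrow> chi v"
proof
  assume v: "v \<in> Mor" and "(MM, xf) \<in> Zs v"
  then have le: "\<forall>i. enat (d v i) \<le> MM i" and x: "xf (\<lambda>_. 0, d v) = v" unfolding Zs_def by auto
  then have "tt (d v) = v" using xf_0 by simp
  then show "chi v" using tt_prop(2)[OF le] by simp
next
  assume v: "v \<in> Mor" and c: "chi v"
  have le: "\<forall>i. enat (d v i) \<le> MM i" using MM_upper v c by blast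
  have "xf (\<lambda>_. 0, d v) = v" using xf_0[OF le] tt_eq[OF v c] by simp
  then show "(MM, xf) \<in> Zs v" using le limit_in_X unfolding Zs_def by auto
qed

end


lemma limit_exists:
  assumes "finitely_aligned Mor r s cmp d"
    and "\<And>K. finite K \<Longrightarrow> K \<subseteq> Mor \<Longrightarrow> \<exists>y\<in>Q. \<forall>v\<in>K. (y \<in> Zs v) = chi v"
    and "\<exists>v\<in>Mor. chi v"
  shows "\<exists>y\<in>XX. \<forall>v\<in>Mor. (y \<in> Zs v) = chi v"
  using limit_in_X[OF assms] limit_Zs[OF assms] by blast

lemma D_set_Zs: "D_set k Mor Obj r s cmp d G = {y \<in> XX. \<exists>(l, mu)\<in>G. y \<in> Zs mu}"
  unfolding D_set_def Zs_def by auto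

lemma Zs_sub: "Zs v \<subseteq> XX" unfolding Zs_def by auto

end

lemma gen_pullback:
  assumes "generate_topology_on SS U"
    and "\<And>B. B \<in> SS \<Longrightarrow> \<exists>V. openin P V \<and> B \<inter> X = {y \<in> X. e y \<in> V}"
  shows "\<exists>V. openin P V \<and> U \<inter> X = {y \<in> X. e y \<in> V}"
  using assms(1)
proof (induction rule: generate_topology_on.induct)
  case Empty
  then show ?case by (intro exI[of _ "{}"]) auto
next
  case (Int a b)
  then obtain V1 V2 where "openin P V1" "a \<inter> X = {y \<in> X. e y \<in> V1}"
    "openin P V2" "b \<inter> X = {y \<in> X. e y \<in> V2}" by blast
  then show ?case by (intro exI[of _ "V1 \<inter> V2"]) auto
next
  case (UN K)
  then obtain Vf where Vf: "\<And>u. u \<in> K \<Longrightarrow> openin P (Vf u) \<and> u \<inter> X = {y \<in> X. e y \<in> Vf u}"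
    by metis
  have "openin P (\<Union>(Vf ` K))" using Vf by auto
  moreover have "\<Union>K \<inter> X = {y \<in> X. e y \<in> \<Union>(Vf ` K)}" using Vf by blast
  ultimately show ?case by blast
next
  case (Basis s)
  then show ?case using assms(2) by blast
qed

lemma compact_pullback:
  assumes "S \<subseteq> topspace T" "S \<subseteq> X"
    and op: "\<And>U. openin T U \<Longrightarrow> \<exists>V. openin P V \<and> U \<inter> X = {y \<in> X. e y \<in> V}"
    and c: "compactin P (e ` S)"
  shows "compactin T S"
  unfolding compactin_def
proof (intro conjI allI impI)
  show "S \<subseteq> topspace T" by fact
  fix UU assume UU: "(\<forall>U\<in>UU. openin T U) \<and> S \<subseteq> \<Union>UU"
  then obtain Vf where Vf: "\<And>U. U \<in> UU \<Longrightarrow> openin P (Vf U) \<and> U \<inter> X = {y \<in> X. e y \<in> Vf U}"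
    using op by metis
  have "e ` S \<subseteq> \<Union>(Vf ` UU)"
  proof
    fix z assume "z \<in> e ` S"
    then obtain y where y: "y \<in> S" "z = e y" by blast
    then obtain U where "U \<in> UU" "y \<in> U" using UU by blast
    then show "z \<in> \<Union>(Vf ` UU)" using Vf[of U] y assms(2) by blast
  qed
  moreover have "\<forall>V\<in>Vf ` UU. openin P V" using Vf by blast
  ultimately obtain FF where FF: "finite FF" "FF \<subseteq> Vf ` UU" "e ` S \<subseteq> \<Union>FF"
    using c[unfolded compactin_def, THEN conjunct2, rule_format, of "Vf ` UU"] by blast
  then obtain UU' where UU': "UU' \<subseteq> UU" "finite UU'" "FF = Vf ` UU'"
    by (meson finite_subset_image)
  have "S \<subseteq> \<Union>UU'"
  proof
    fix y assume y: "y \<in> S"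
    then obtain U where "U \<in> UU'" "e y \<in> Vf U" using FF UU' by blast
    then show "y \<in> \<Union>UU'" using Vf[of U] UU' y assms(2) by blast
  qed
  then show "\<exists>F. finite F \<and> F \<subseteq> UU \<and> S \<subseteq> \<Union>F" using UU' by blast
qed




theorem corollary5p8:
  fixes k :: nat and Mor Obj :: "'a set" and r s :: "'a \<Rightarrow> 'a"
    and cmp :: "'a \<Rightarrow> 'a \<Rightarrow> 'a" and d :: "'a \<Rightarrow> nat \<Rightarrow> nat"
    and F :: "('a \<times> 'a) set"
  assumes "k_graph k Mor Obj r s cmp d"
    and "finitely_aligned Mor r s cmp d"
    and "F \<in> S_Lambda Mor r s cmp d"
  shows "compactin (path_topology k Mor Obj r s cmp d) (D_set k Mor Obj r s cmp d F)"
proof -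
  interpret kg k Mor Obj r s cmp d by unfold_locales (rule assms(1))
  define P where "P = product_topology (\<lambda>_::'a. discrete_topology (UNIV::bool set)) Mor"
  define e where "e = (\<lambda>y. restrict (\<lambda>v. y \<in> Zs v) Mor)"
  define Av where "Av = (\<lambda>v b. {f \<in> topspace P. f v = b})"
  have Aopen: "openin P (Av v b)" if "v \<in> Mor" for v b
    using openin_continuous_map_preimage[OF continuous_map_product_projection[OF that],
        of "\<lambda>_. discrete_topology UNIV" "{b}"]
    unfolding Av_def P_def by simp
  have Aclosed: "closedin P (Av v b)" if "v \<in> Mor" for v b
    using closedin_continuous_map_preimage[OF continuous_map_product_projection[OF that],
        of "\<lambda>_. discrete_topology UNIV" "{b}"]
    unfolding Av_def P_def by simp
  have topP: "topspace P = (\<Pi>\<^sub>E i\<in>Mor. UNIV)" unfolding P_def by simp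
  have eP: "e y \<in> topspace P" for y unfolding topP e_def by simp
  have ev: "v \<in> Mor \<Longrightarrow> e y v = (y \<in> Zs v)" for y v unfolding e_def by simp
  define VG where "VG G = \<Union>((\<lambda>(l, mu). Av mu True) ` G)" for G :: "('a \<times> 'a) set"
  have SL: "finite G" "G \<subseteq> {(l, m). l \<in> Mor \<and> m \<in> Mor \<and> s l = s m}"
    if "G \<in> S_Lambda Mor r s cmp d" for G using that unfolding S_Lambda_def by auto
  have VGo: "openin P (VG G)" and VGc: "closedin P (VG G)" if G: "G \<in> S_Lambda Mor r s cmp d" for G
  proof -
    show "openin P (VG G)" unfolding VG_def using SL[OF G] Aopen by (intro openin_Union) auto
    show "closedin P (VG G)" unfolding VG_def using SL[OF G] Aclosed by (intro closedin_Union) auto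
  qed
  have DG: "D_set k Mor Obj r s cmp d G = {y \<in> XX. e y \<in> VG G}"
    if G: "G \<in> S_Lambda Mor r s cmp d" for G
  proof -
    have "e y \<in> VG G \<longleftrightarrow> (\<exists>(l, mu)\<in>G. y \<in> Zs mu)" for y
    proof -
      have "e y \<in> VG G \<longleftrightarrow> (\<exists>(l, mu)\<in>G. e y mu)" unfolding VG_def Av_def using eP[of y] by auto
      also have "\<dots> \<longleftrightarrow> (\<exists>(l, mu)\<in>G. y \<in> Zs mu)"
      proof (rule bex_cong[OF refl])
        fix z assume "z \<in> G"
        then obtain l mu where "z = (l, mu)" "mu \<in> Mor" using SL(2)[OF G] by auto
        then show "(case z of (l, mu) \<Rightarrow> e y mu) = (case z of (l, mu) \<Rightarrow> y \<in> Zs mu)" using ev by simp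
      qed
      finally show ?thesis .
    qed
    then show ?thesis unfolding D_set_Zs by auto
  qed
  have Dsub: "D_set k Mor Obj r s cmp d G \<subseteq> XX" for G unfolding D_set_def by auto
  let ?SS = "insert XX (\<Union>G\<in>S_Lambda Mor r s cmp d.
            {D_set k Mor Obj r s cmp d G, XX - D_set k Mor Obj r s cmp d G})"
  have subb: "\<exists>V. openin P V \<and> B \<inter> XX = {y \<in> XX. e y \<in> V}" if B: "B \<in> ?SS" for B
  proof -
    consider "B = XX" | G where "G \<in> S_Lambda Mor r s cmp d" "B = D_set k Mor Obj r s cmp d G"
      | G where "G \<in> S_Lambda Mor r s cmp d" "B = XX - D_set k Mor Obj r s cmp d G"
      using B by blast
    then show ?thesis
    proof cases
      case 1
      then show ?thesis using eP by (intro exI[of _ "topspace P"]) auto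
    next
      case 2
      then show ?thesis using DG VGo Dsub by (intro exI[of _ "VG G"]) auto
    next
      case 3
      then show ?thesis using DG[OF 3(1)] VGc[OF 3(1)] eP
        by (intro exI[of _ "topspace P - VG G"]) auto
    qed
  qed
  have op: "\<exists>V. openin P V \<and> U \<inter> XX = {y \<in> XX. e y \<in> V}"
    if "openin (path_topology k Mor Obj r s cmp d) U" for U
    using gen_pullback[OF openin_topology_generated_by[OF that[unfolded path_topology_def]] subb] .
  have top: "topspace (path_topology k Mor Obj r s cmp d) = XX"
    unfolding path_topology_def topology_generated_by_topspace using Dsub by auto
  have FS: "finite F" "F \<subseteq> {(l, m). l \<in> Mor \<and> m \<in> Mor \<and> s l = s m}" using SL[OF assms(3)] by auto
  let ?D = "D_set k Mor Obj r s cmp d F"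
  have NK: "openin P {f \<in> topspace P. \<forall>v\<in>K. f v = chi v}" if "finite K" "K \<subseteq> Mor" for K chi
    using that
  proof (induction K rule: finite_induct)
    case empty
    then show ?case by simp
  next
    case (insert v K)
    have eq: "{f \<in> topspace P. \<forall>u\<in>insert v K. f u = chi u} = Av v (chi v) \<inter> {f \<in> topspace P. \<forall>u\<in>K. f u = chi u}"
      unfolding Av_def by auto
    have vK: "v \<in> Mor" "K \<subseteq> Mor" using insert.prems by auto
    show ?case unfolding eq by (rule openin_Int[OF Aopen[OF vK(1)] insert.IH[OF vK(2)]])
  qed
  have closed: "closedin P (e ` ?D)"
    unfolding closedin_def
  proof
    show "e ` ?D \<subseteq> topspace P" using eP by auto
    show "openin P (topspace P - e ` ?D)"
    proof (subst openin_subopen, intro ballI)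
      fix chi assume chi: "chi \<in> topspace P - e ` ?D"
      show "\<exists>T. openin P T \<and> chi \<in> T \<and> T \<subseteq> topspace P - e ` ?D"
      proof (rule ccontr)
        assume nT: "\<not> ?thesis"
        have C: "\<exists>y\<in>?D. \<forall>v\<in>K. (y \<in> Zs v) = chi v" if "finite K" "K \<subseteq> Mor" for K
        proof -
          have "\<not> {f \<in> topspace P. \<forall>v\<in>K. f v = chi v} \<subseteq> topspace P - e ` ?D"
            using nT NK[OF that, of chi] chi by auto
          then obtain y where yD: "y \<in> ?D" and ag: "\<forall>v\<in>K. e y v = chi v" by auto
          have "\<forall>v\<in>K. (y \<in> Zs v) = chi v"
          proof
            fix v assume "v \<in> K"
            then show "(y \<in> Zs v) = chi v" using ag ev[of v y] that(2) by auto
          qed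
          then show ?thesis using yD by blast
        qed
        have sF: "finite (snd ` F)" "snd ` F \<subseteq> Mor" using FS by auto
        obtain y0 where y0: "y0 \<in> ?D" "\<forall>v\<in>snd ` F. (y0 \<in> Zs v) = chi v"
          using C[OF sF] by blast
        then obtain l mu where lmu: "(l, mu) \<in> F" "y0 \<in> Zs mu" unfolding D_set_Zs by auto
        have Tne: "\<exists>v\<in>Mor. chi v" using lmu y0(2) FS by force
        obtain y where y: "y \<in> XX" "\<forall>v\<in>Mor. (y \<in> Zs v) = chi v"
          using limit_exists[OF assms(2) C Tne] by blast
        have "y \<in> Zs mu" using y lmu FS Tne y0 by force
        then have yD: "y \<in> ?D" using lmu y unfolding D_set_Zs by auto
        have "e y = chi"
        proof
          fix v show "e y v = chi v"
          proof (cases "v \<in> Mor")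
            case True then show ?thesis using ev y by simp
          next
            case False
            then show ?thesis using chi unfolding topP e_def by (auto simp: PiE_def extensional_def)
          qed
        qed
        then show False using yD chi by auto
      qed
    qed
  qed
  have cs: "compact_space P" unfolding P_def
    by (simp add: compact_space_product_topology compact_space_discrete_topology)
  show ?thesis
    by (rule compact_pullback[OF _ Dsub op closedin_compact_space[OF cs closed]]) (use top Dsub in auto)
qed

end
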